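(* Let $p$ and $q$ be distinct primes. (i) If $n = p^2 q$ (with $p, q \geq 2$), then $\Gamma(\mathbb{Z}_n)$ is very cost effective. (ii) If $n = p^2 q^2$ with $p, q \geq 3$ and $p < q$, then $\Gamma(\mathbb{Z}_n)$ is very cost effective.
   Context: $\mathbb{Z}_n$ is the ring of residue classes modulo $n$. The zero-divisor graph $\Gamma(\mathbb{Z}_n)$ has as vertices the nonzero zero-divisors of $\mathbb{Z}_n$, two distinct vertices being adjacent iff their product is $0$. For a graph $G=(V,E)$ and $S\subseteq V$, a vertex $v\in S$ is very cost effective if $|N(v)\cap S| < |N(v)\cap (V\setminus S)|$, where $N(v)$ is the open neighborhood of $v$; $S$ is very cost effective if every vertex of $S$ is. A bipartition $\{S, V\setminus S\}$ is very cost effective if both parts are very cost effective sets, and $G$ is very cost effective if it has a very cost effective bipartition. *)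

theory Defs
  imports Main "HOL-Computational_Algebra.Primes"
begin

definition nbhd :: "'a set \<Rightarrow> ('a \<Rightarrow> 'a \<Rightarrow> bool) \<Rightarrow> 'a \<Rightarrow> 'a set" where
  "nbhd V adj v = {u \<in> V. adj v u}"

definition very_cost_effective_vertex ::
  "'a set \<Rightarrow> ('a \<Rightarrow> 'a \<Rightarrow> bool) \<Rightarrow> 'a set \<Rightarrow> 'a \<Rightarrow> bool" where
  "very_cost_effective_vertex V adj S v \<longleftrightarrow>
     card (nbhd V adj v \<inter> S) < card (nbhd V adj v \<inter> (V - S))"

definition very_cost_effective_set ::
  "'a set \<Rightarrow> ('a \<Rightarrow> 'a \<Rightarrow> bool) \<Rightarrow> 'a set \<Rightarrow> bool" where
  "very_cost_effective_set V adj S \<longleftrightarrow>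
     S \<subseteq> V \<and> (\<forall>v\<in>S. very_cost_effective_vertex V adj S v)"

definition very_cost_effective_graph ::
  "'a set \<Rightarrow> ('a \<Rightarrow> 'a \<Rightarrow> bool) \<Rightarrow> bool" where
  "very_cost_effective_graph V adj \<longleftrightarrow>
     (\<exists>S. S \<subseteq> V \<and> very_cost_effective_set V adj S
          \<and> very_cost_effective_set V adj (V - S))"

text \<open>Zero-divisor graph of Z_n, residues represented by 0..n-1.
  Vertices: nonzero zero-divisors; edges: distinct vertices with product 0 mod n.\<close>
definition zd_vertices :: "nat \<Rightarrow> nat set" where
  "zd_vertices n = {a. 0 < a \<and> a < n \<and> (\<exists>b. 0 < b \<and> b < n \<and> n dvd a * b)}"

definition zd_adj :: "nat \<Rightarrow> nat \<Rightarrow> nat \<Rightarrow> bool" where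
  "zd_adj n a b \<longleftrightarrow> a \<noteq> b \<and> n dvd a * b"

end

theory Submission
  imports Defs "HOL-Number_Theory.Number_Theory"
begin


lemma nbhd_zd:
  assumes "0 < v" "v < n"
  shows "nbhd (zd_vertices n) (zd_adj n) v = {b. 0<b \<and> b<n \<and> b\<noteq>v \<and> n dvd v*b}"
  using assms unfolding nbhd_def zd_vertices_def zd_adj_def
  by (auto simp: mult.commute)

lemma zd_vertex_intro:
  "0<a \<Longrightarrow> a<n \<Longrightarrow> 0<b \<Longrightarrow> b<n \<Longrightarrow> n dvd a*b \<Longrightarrow> a \<in> zd_vertices n"
  unfolding zd_vertices_def by blast

lemma zd_vertex_range: "a \<in> zd_vertices n \<Longrightarrow> 0 < a \<and> a < n"
  unfolding zd_vertices_def by blast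

lemma pp_dvd:
  fixes p v b :: nat
  assumes "prime p"
  shows "p^2 dvd v*b \<longleftrightarrow> (p^2 dvd v \<or> p^2 dvd b \<or> (p dvd v \<and> p dvd b))"
proof
  assume h: "p^2 dvd v*b"
  show "p^2 dvd v \<or> p^2 dvd b \<or> (p dvd v \<and> p dvd b)"
  proof (cases "p dvd v")
    case False
    then have "coprime (p^2) v" using assms
      by (simp add: prime_imp_coprime)
    then have "p^2 dvd b" using h by (simp add: coprime_dvd_mult_right_iff)
    then show ?thesis by blast
  next
    case True
    then obtain u where u: "v = p*u" by blast
    have "p dvd u \<or> p dvd b"
    proof -
      have "p*p dvd p*(u*b)" using h u by (simp add: power2_eq_square mult.assoc)
      then have "p dvd u*b" using assms by (simp add: prime_gt_0_nat)
      then show ?thesis using assms prime_dvd_mult_iff by blast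
    qed
    then show ?thesis using u True by (auto simp: power2_eq_square)
  qed
next
  assume "p^2 dvd v \<or> p^2 dvd b \<or> (p dvd v \<and> p dvd b)"
  then show "p^2 dvd v*b"
    by (auto simp: power2_eq_square mult_dvd_mono)
qed

lemma zd_vertex_dvd:
  fixes p q n a :: nat
  assumes "prime p" "prime q" "n = p^i * q^j" "a \<in> zd_vertices n"
  shows "p dvd a \<or> q dvd a"
proof (rule ccontr)
  assume c: "\<not> (p dvd a \<or> q dvd a)"
  obtain b where b: "0 < b" "b < n" "n dvd a*b" using assms(4) unfolding zd_vertices_def by blast
  have "coprime a p" "coprime a q" using c assms(1,2)
    by (metis prime_imp_coprime coprime_commute)+
  then have "coprime n a" using assms(3) by (simp add: coprime_commute)
  then have "n dvd b" using b(3) by (simp add: coprime_dvd_mult_right_iff)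
  then show False using b by (simp add: nat_dvd_not_less)
qed

lemma card_lt_helper:
  assumes "finite N" "N \<inter> A = {}" "x \<in> N \<inter> B"
  shows "card (N \<inter> A) < card (N \<inter> B)"
proof -
  have "card (N \<inter> B) > 0" using assms by (auto simp: card_gt_0_iff)
  then show ?thesis using assms(2) by simp
qed



lemma part1:
  fixes p q :: nat
  assumes pp: "prime p" and qp: "prime q" and ne: "p \<noteq> q"
  shows "very_cost_effective_graph (zd_vertices (p^2 * q)) (zd_adj (p^2 * q))"
proof -
  define n where "n = p^2*q"
  define V where "V = zd_vertices n"
  define S where "S = {v\<in>V. q dvd v}"
  have p1: "p > 1" and q1: "q > 1" using pp qp prime_gt_1_nat by auto
  have cpq: "coprime p q" using pp qp ne by (simp add: primes_coprime)
  have cp2: "coprime (p^2) q" using cpq by simp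
  have ndvd: "n dvd x \<longleftrightarrow> p^2 dvd x \<and> q dvd x" for x
  proof
    assume "n dvd x" then show "p^2 dvd x \<and> q dvd x" unfolding n_def
      using dvd_mult_left dvd_mult_right by blast
  next
    assume "p^2 dvd x \<and> q dvd x" then show "n dvd x" unfolding n_def
      using divides_mult[OF _ _ cp2] by blast
  qed
  have pqdvd: "p*q dvd x \<longleftrightarrow> p dvd x \<and> q dvd x" for x
  proof
    assume "p*q dvd x" then show "p dvd x \<and> q dvd x"
      using dvd_mult_left dvd_mult_right by blast
  next
    assume "p dvd x \<and> q dvd x" then show "p*q dvd x"
      using divides_mult[OF _ _ cpq] by blast
  qed
  have qnp: "\<not> q dvd p" using pp qp ne primes_dvd_imp_eq by blast
  have nb: "nbhd V (zd_adj n) v = {b. 0<b \<and> b<n \<and> b\<noteq>v \<and> n dvd v*b}" if "v \<in> V" for v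
    using that zd_vertex_range nbhd_zd unfolding V_def by blast
  have nbV: "nbhd V (zd_adj n) v \<subseteq> V" for v unfolding nbhd_def by blast
  have fin: "finite (nbhd V (zd_adj n) v)" if "v \<in> V" for v
    using nb[OF that] by (auto intro: finite_subset[of _ "{..<n}"])
  have inV: "b \<in> V" if "0<b" "b<n" "0<v" "v<n" "n dvd b*v" for b v
    using zd_vertex_intro that unfolding V_def by blast
  have pn: "p*q < n" unfolding n_def using p1 q1 by (simp add: power2_eq_square)
  have p2n: "p^2 < n" unfolding n_def using p1 q1 by simp
  have vS: "very_cost_effective_vertex V (zd_adj n) S v" if v: "v \<in> S" for v
  proof -
    have vV: "v \<in> V" and qv: "q dvd v" using v S_def by auto
    have vr: "0<v" "v<n" using vV zd_vertex_range V_def by auto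
    let ?N = "nbhd V (zd_adj n) v"
    have NS: "?N \<inter> S = {b\<in>?N. q dvd b}" and NT: "?N \<inter> (V - S) = {b\<in>?N. \<not> q dvd b}"
      using nbV S_def by auto
    show ?thesis
    proof (cases "p dvd v")
      case False
      have "?N \<inter> S = {}"
      proof (rule ccontr)
        assume "?N \<inter> S \<noteq> {}"
        then obtain b where b: "0<b" "b<n" "n dvd v*b" "q dvd b" using NS nb[OF vV] by auto
        then have "p^2 dvd b" using pp_dvd[OF pp, of v b] False ndvd dvd_trans
          by (meson dvd_power[of 2 p] zero_less_numeral)
        then have "n dvd b" using b ndvd by blast
        then show False using b by (simp add: nat_dvd_not_less)
      qed
      moreover have "p^2 \<in> ?N \<inter> (V - S)"
      proof -
        have a: "\<not> q dvd p^2" using qnp qp by (meson prime_dvd_power)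
        have "n dvd v * p^2" using qv by (simp add: ndvd)
        moreover have "p^2 \<noteq> v" using a qv by auto
        moreover have "p^2 \<in> V" using inV[of "p^2" v] vr p2n p1 \<open>n dvd v*p^2\<close>
          by (simp add: mult.commute)
        ultimately show ?thesis using nb[OF vV] NT p2n p1 a by auto
      qed
      ultimately show ?thesis unfolding very_cost_effective_vertex_def
        by (intro card_lt_helper[OF fin[OF vV]])
    next
      case True
      have notp2: "\<not> p^2 dvd v" using qv vr ndvd by (meson nat_dvd_not_less)
      have "?N \<inter> S \<subseteq> (\<lambda>j. p*q*j) ` {1..<p}"
      proof
        fix b assume "b \<in> ?N \<inter> S"
        then have b: "0<b" "b<n" "n dvd v*b" "q dvd b" using NS nb[OF vV] by auto
        have "p dvd b" using b(3) ndvd pp_dvd[OF pp, of v b] notp2 True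
          by (metis dvd_power[of 2 p] zero_less_numeral dvd_trans)
        then obtain j where j: "b = p*q*j" using b(4) pqdvd by blast
        have "p*q*j < p*q*p" using b(2) j unfolding n_def by (simp add: power2_eq_square algebra_simps)
        then have "j < p" by (simp only: mult_less_cancel1)
        moreover have "j \<ge> 1" using b(1) j by (cases j) auto
        ultimately show "b \<in> (\<lambda>j. p*q*j) ` {1..<p}" using j by auto
      qed
      then have "card (?N \<inter> S) \<le> card ((\<lambda>j. p*q*j) ` {1..<p})"
        by (intro card_mono) auto
      also have "\<dots> \<le> card {1..<p}" by (rule card_image_le) simp
      finally have c1: "card (?N \<inter> S) \<le> p - 1" by simp
      have sub: "(\<lambda>i. p*(1+q*i)) ` {..<p} \<subseteq> ?N \<inter> (V - S)"
      proof
        fix b assume "b \<in> (\<lambda>i. p*(1+q*i)) ` {..<p}"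
        then obtain i where i: "i < p" "b = p*(1+q*i)" by blast
        have "q*(i+1) \<le> q*p" using i by (intro mult_le_mono2) simp
        then have "1 + q*i < p*q" using q1 by (simp add: algebra_simps)
        then have "p*(1+q*i) < p*(p*q)" using p1 by (intro mult_strict_left_mono) auto
        then have bn: "b < n" using i unfolding n_def by (simp add: power2_eq_square mult.assoc)
        have b0: "0 < b" using i p1 by simp
        have nq: "\<not> q dvd b"
        proof
          assume "q dvd b"
          then have "q dvd 1 + q*i" using i qnp qp prime_dvd_mult_iff by blast
          then have "q dvd 1" using dvd_add_left_iff[of q "q*i" 1] dvd_triv_left[of q i] by blast
          then show False using q1 by simp
        qed
        have pqv: "p*q dvd v" using True qv pqdvd by blast
        have "n dvd v*b"
        proof -
          obtain w where "v = p*q*w" using pqv by blast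
          then have "v*b = n*(w*(1+q*i))" using i unfolding n_def by (simp add: power2_eq_square algebra_simps)
          then show ?thesis by simp
        qed
        moreover have "b \<noteq> v" using nq qv by auto
        moreover have "b \<in> V" using inV[of b v] b0 bn vr \<open>n dvd v*b\<close> by (simp add: mult.commute)
        ultimately show "b \<in> ?N \<inter> (V - S)" using nb[OF vV] b0 bn nq S_def by auto
      qed
      have "inj_on (\<lambda>i. p*(1+q*i)) {..<p}" using p1 q1 by (auto simp: inj_on_def)
      then have "card ((\<lambda>i. p*(1+q*i)) ` {..<p}) = p" by (simp add: card_image)
      moreover have "card ((\<lambda>i. p*(1+q*i)) ` {..<p}) \<le> card (?N \<inter> (V - S))"
        using sub fin[OF vV] by (intro card_mono) auto
      ultimately have "p \<le> card (?N \<inter> (V - S))" by simp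
      then show ?thesis unfolding very_cost_effective_vertex_def using c1 p1 by linarith
    qed
  qed
  have vT: "very_cost_effective_vertex V (zd_adj n) (V - S) v" if v: "v \<in> V - S" for v
  proof -
    have vV: "v \<in> V" and nqv: "\<not> q dvd v" using v S_def by auto
    have pv: "p dvd v" using zd_vertex_dvd[OF pp qp, of n 2 1 v] vV nqv unfolding V_def n_def by auto
    have vr: "0<v" "v<n" using vV zd_vertex_range V_def by auto
    let ?N = "nbhd V (zd_adj n) v"
    have e: "V - (V - S) = S" using S_def by auto
    have "?N \<inter> (V - S) = {}"
    proof (rule ccontr)
      assume "?N \<inter> (V - S) \<noteq> {}"
      then obtain b where b: "n dvd v*b" "\<not> q dvd b" "b \<in> V" using nb[OF vV] S_def nbV by auto
      then have "q dvd v*b" using ndvd by blast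
      then show False using b nqv qp prime_dvd_mult_iff by blast
    qed
    moreover have "p*q \<in> ?N \<inter> S"
    proof -
      obtain u where u: "v = p*u" using pv by blast
      have "n dvd v*(p*q)" unfolding n_def u by (simp add: power2_eq_square algebra_simps)
      moreover have "p*q \<in> V" using inV[of "p*q" v] vr pn p1 q1 \<open>n dvd v*(p*q)\<close> by (simp add: mult.commute)
      moreover have "p*q \<noteq> v" using nqv by auto
      ultimately show ?thesis using nb[OF vV] pn p1 q1 S_def by auto
    qed
    ultimately show ?thesis unfolding very_cost_effective_vertex_def e
      by (intro card_lt_helper[OF fin[OF vV]])
  qed
  have "S \<subseteq> V" using S_def by auto
  then show ?thesis
    unfolding n_def[symmetric] V_def[symmetric] very_cost_effective_graph_def very_cost_effective_set_def
    using vS vT by blast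
qed



lemma dvd_next_le:
  fixes m b c :: nat
  assumes "m dvd b" "b < m*c"
  shows "b + m \<le> m*c"
proof -
  obtain j where j: "b = m*j" using assms(1) by blast
  then have "m*j < m*c" using assms(2) by simp
  then have "j < c" by (simp only: mult_less_cancel1)
  then have "m*(j+1) \<le> m*c" by (intro mult_le_mono2) simp
  then show ?thesis using j by (simp add: algebra_simps)
qed

lemma card_R1:
  fixes p q :: nat
  assumes "p = 2*a+1" "q = 2*h+1" "a \<ge> 1"
  defines "R \<equiv> ({1..<p} \<times> {1..h}) \<union> (({p-1} \<times> {h+1..<q}) \<union> ({1..a} \<times> {h+1}))"
  shows "2 * card R = p*q - 1"
proof -
  have d1: "({1..<p} \<times> {1..h}) \<inter> (({p-1} \<times> {h+1..<q}) \<union> ({1..a} \<times> {h+1})) = {}" by auto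
  have d2: "({p-1} \<times> {h+1..<q}) \<inter> ({1..a} \<times> {h+1}) = {}" using assms(1,3) by auto
  have "card R = card ({1..<p} \<times> {1..h}) + (card ({p-1} \<times> {h+1..<q}) + card ({1..a} \<times> {h+1}))"
    unfolding R_def using d1 d2 by (simp add: card_Un_disjoint)
  also have "\<dots> = (p-1)*h + (h + a)" using assms(1,2) by (simp add: card_cartesian_product)
  finally have "card R = 2*a*h + h + a" using assms(1) by simp
  then show ?thesis using assms(1,2) by (simp add: algebra_simps)
qed

lemma bij_restrict_card:
  assumes "bij_betw f A B" "R \<subseteq> B"
  shows "card {x\<in>A. f x \<in> R} = card R"
proof -
  have inj: "inj_on f {x\<in>A. f x \<in> R}" using assms(1) unfolding bij_betw_def
    by (rule inj_on_subset[OF conjunct1]) auto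
  have "f ` {x\<in>A. f x \<in> R} = R"
  proof
    show "f ` {x\<in>A. f x \<in> R} \<subseteq> R" by auto
    show "R \<subseteq> f ` {x\<in>A. f x \<in> R}"
    proof
      fix r assume "r \<in> R"
      then have "r \<in> f ` A" using assms unfolding bij_betw_def by auto
      then obtain x where "x \<in> A" "f x = r" by auto
      then show "r \<in> f ` {x\<in>A. f x \<in> R}" using \<open>r \<in> R\<close> by auto
    qed
  qed
  then show ?thesis using card_image[OF inj] by simp
qed



lemma part2:
  fixes p q :: nat
  assumes pp: "prime p" and qp: "prime q" and p3: "3 \<le> p" and pq: "p < q"
  shows "very_cost_effective_graph (zd_vertices (p^2 * q^2)) (zd_adj (p^2 * q^2))"
proof -
  define n where "n = p^2*q^2"
  define V where "V = zd_vertices n"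
  define h where "h = (q - 1) div 2"
  define a where "a = (p - 1) div 2"
  define R where "R = ({1..<p} \<times> {1..h}) \<union> (({p-1} \<times> {h+1..<q}) \<union> ({1..a} \<times> {h+1}))"
  define C where "C = {k\<in>totatives (p*q). (k mod p, k mod q) \<in> R}"
  define T where "T = (\<lambda>k. p*q*k) ` C"
  define K where "K = {v. 0<v \<and> v<n \<and> p*q dvd v}"
  define A where "A = {v\<in>V. \<not> p*q dvd v \<and> (p dvd v \<or> \<not> q^2 dvd v)} \<union> T"
  have ne: "p \<noteq> q" using pq by simp
  have p1: "p > 1" and q1: "q > 1" using pp qp prime_gt_1_nat by auto
  have cpq: "coprime p q" using pp qp ne by (simp add: primes_coprime)
  have cp2: "coprime (p^2) (q^2)" using cpq by simp
  have qnp: "\<not> q dvd p" using pp qp ne primes_dvd_imp_eq by blast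
  have pnq: "\<not> p dvd q" using pp qp ne primes_dvd_imp_eq by blast
  have podd: "odd p" using pp p3 prime_odd_nat by simp
  have qodd: "odd q" using qp p3 pq prime_odd_nat by simp
  have pa: "p = 2*a+1" using podd unfolding a_def by presburger
  have qh: "q = 2*h+1" using qodd unfolding h_def by presburger
  have a1: "a \<ge> 1" using pa p3 by simp
  have h1: "h \<ge> 1" using qh pq p3 by simp
  have ndvd: "n dvd x \<longleftrightarrow> p^2 dvd x \<and> q^2 dvd x" for x
  proof
    assume "n dvd x" then show "p^2 dvd x \<and> q^2 dvd x" unfolding n_def
      using dvd_mult_left dvd_mult_right by blast
  next
    assume "p^2 dvd x \<and> q^2 dvd x" then show "n dvd x" unfolding n_def
      using divides_mult[OF _ _ cp2] by blast
  qed
  have pqdvd: "p*q dvd x \<longleftrightarrow> p dvd x \<and> q dvd x" for x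
  proof
    assume "p*q dvd x" then show "p dvd x \<and> q dvd x"
      using dvd_mult_left dvd_mult_right by blast
  next
    assume "p dvd x \<and> q dvd x" then show "p*q dvd x"
      using divides_mult[OF _ _ cpq] by blast
  qed
  have p2p: "p^2 dvd x \<Longrightarrow> p dvd x" for x by (metis dvd_power dvd_trans zero_less_numeral)
  have q2q: "q^2 dvd x \<Longrightarrow> q dvd x" for x by (metis dvd_power dvd_trans zero_less_numeral)
  have nlt: "\<not> (p^2 dvd x \<and> q^2 dvd x)" if "0 < x" "x < n" for x
    using that ndvd by (meson nat_dvd_not_less)
  have nb: "nbhd V (zd_adj n) v = {b. 0<b \<and> b<n \<and> b\<noteq>v \<and> n dvd v*b}" if "v \<in> V" for v
    using that zd_vertex_range nbhd_zd unfolding V_def by blast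
  have nbV: "nbhd V (zd_adj n) v \<subseteq> V" for v unfolding nbhd_def by blast
  have fin: "finite (nbhd V (zd_adj n) v)" if "v \<in> V" for v
    using nb[OF that] by (auto intro: finite_subset[of _ "{..<n}"])
  have inV: "b \<in> V" if "0<b" "b<n" "0<v" "v<n" "n dvd b*v" for b v
    using zd_vertex_intro that unfolding V_def by blast
  have pq1: "1 < p*q" using p1 q1 by (simp add: one_less_mult)
  have "p*q*1 < p*q*(p*q)" using pq1 p1 q1 by (intro mult_strict_left_mono) auto
  then have pqn: "p*q < n" unfolding n_def by (simp add: power2_eq_square algebra_simps)
  have pqq: "p*q < q^2" using pq q1 by (simp add: power2_eq_square)
  have Rsub: "R \<subseteq> totatives p \<times> totatives q"
    using pa qh a1 h1 unfolding R_def totatives_prime[OF pp] totatives_prime[OF qp] by auto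
  have bij: "bij_betw (\<lambda>x. (x mod p, x mod q)) (totatives (p * q)) (totatives p \<times> totatives q)"
    using bij_betw_totatives[OF p1 q1 cpq] .
  have cardC: "card C = card R" unfolding C_def using bij_restrict_card[OF bij Rsub] .
  have card2R: "2 * card R = p*q - 1" using card_R1[OF pa qh a1] unfolding R_def .
  have cardT: "card T = card C" unfolding T_def using p1 q1 by (intro card_image) (auto simp: inj_on_def)
  have Kimg: "K = (\<lambda>k. p*q*k) ` {1..<p*q}"
  proof
    show "K \<subseteq> (\<lambda>k. p*q*k) ` {1..<p*q}"
    proof
      fix v assume "v \<in> K"
      then have v: "0<v" "v<n" "p*q dvd v" using K_def by auto
      then obtain k where k: "v = p*q*k" by blast
      have "p*q*k < p*q*(p*q)" using v(2) k unfolding n_def by (simp add: power2_eq_square algebra_simps)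
      then have "k < p*q" by (simp only: mult_less_cancel1)
      moreover have "k \<ge> 1" using v(1) k by (cases k) auto
      ultimately show "v \<in> (\<lambda>k. p*q*k) ` {1..<p*q}" using k by auto
    qed
    show "(\<lambda>k. p*q*k) ` {1..<p*q} \<subseteq> K"
    proof
      fix v assume "v \<in> (\<lambda>k. p*q*k) ` {1..<p*q}"
      then obtain k where kk: "k \<in> {1..<p*q}" "v = p*q*k" by (rule imageE)
      then have k: "v = p*q*k" "1 \<le> k" "k < p*q" by auto
      have "p*q*k < p*q*(p*q)" using k p1 q1 by simp
      then have "v < n" using k unfolding n_def by (simp add: power2_eq_square algebra_simps)
      then show "v \<in> K" using k p1 q1 K_def by auto
    qed
  qed
  have cardK: "card K = p*q - 1" unfolding Kimg using p1 q1
    by (subst card_image) (auto simp: inj_on_def)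
  have Tfacts: "0 < b \<and> b < n \<and> p dvd b \<and> q dvd b \<and> \<not> p^2 dvd b \<and> \<not> q^2 dvd b" if bT: "b \<in> T" for b
  proof -
    obtain k where k: "k \<in> totatives (p*q)" "b = p*q*k" using bT unfolding T_def C_def by blast
    have kc: "coprime k (p*q)" and k0: "0 < k" using k(1) by (auto simp: in_totatives_iff)
    have kl: "k < p*q" using totatives_less[OF k(1)] p1 q1 by (simp add: one_less_mult)
    have pk: "\<not> p dvd k"
    proof
      assume "p dvd k"
      then have "is_unit p" using coprime_common_divisor[OF kc, of p] by simp
      then show False using p1 by simp
    qed
    have qk: "\<not> q dvd k"
    proof
      assume "q dvd k"
      then have "is_unit q" using coprime_common_divisor[OF kc, of q] by simp
      then show False using q1 by simp
    qed
    have "p*q*k < p*q*(p*q)" using kl p1 q1 by simp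
    then have bn: "b < n" using k unfolding n_def by (simp add: power2_eq_square algebra_simps)
    have np2: "\<not> p^2 dvd b"
    proof
      assume "p^2 dvd b"
      then have "p*p dvd p*(q*k)" using k by (simp add: power2_eq_square mult.assoc)
      then have "p dvd q*k" using p1 by simp
      then show False using pp pk pnq prime_dvd_mult_iff by blast
    qed
    have nq2: "\<not> q^2 dvd b"
    proof
      assume "q^2 dvd b"
      then have "q*q dvd q*(p*k)" using k by (simp add: power2_eq_square algebra_simps)
      then have "q dvd p*k" using q1 by simp
      then show False using qp qk qnp prime_dvd_mult_iff by blast
    qed
    show ?thesis using k k0 p1 q1 bn np2 nq2 by simp
  qed
  have TK: "T \<subseteq> K" using Tfacts K_def pqdvd by auto
  have finK: "finite K" unfolding Kimg by simp
  have cardKT: "card (K - T) = card T"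
    using card_Diff_subset[OF finite_subset[OF TK finK] TK] cardK cardT cardC card2R by simp
  have "2 * card T = p*q - 1" using cardT cardC card2R by simp
  moreover have "p*q - 1 > 0" using pq1 by simp
  ultimately have Tpos: "card T > 0" by linarith
  have KV: "K \<subseteq> V"
  proof
    fix v assume "v \<in> K"
    then have v: "0<v" "v<n" "p*q dvd v" using K_def by auto
    then obtain w where "v = p*q*w" by blast
    then have "n dvd v*(p*q)" unfolding n_def by (simp add: power2_eq_square algebra_simps)
    then show "v \<in> V" using inV[of v "p*q"] v pqn p1 q1 by simp
  qed
  have TV: "T \<subseteq> V" using TK KV by blast
  have AV: "A \<subseteq> V" using A_def TV by blast
  have eVA: "V - (V - A) = A" using AV by blast
  have Aiff: "b \<in> A \<longleftrightarrow> b \<in> V \<and> ((\<not> p*q dvd b \<and> (p dvd b \<or> \<not> q^2 dvd b)) \<or> b \<in> T)" for b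
    using A_def TV by blast
  have AK: "b \<in> T" if "b \<in> A" "p*q dvd b" for b using that A_def by auto
  have notA: "b \<notin> A" if "p*q dvd b" "p^2 dvd b \<or> q^2 dvd b" for b
  proof
    assume "b \<in> A"
    then have "b \<in> T" using AK that(1) by blast
    then show False using Tfacts[of b] that(2) by blast
  qed
  have A2: "b \<in> A \<longleftrightarrow> b \<in> V \<and> (p dvd b \<or> \<not> q^2 dvd b)" if "\<not> p*q dvd b" for b
  proof -
    have "b \<notin> T" using that Tfacts pqdvd by blast
    then show ?thesis using that A_def by auto
  qed
  have nvb: "n dvd v*b \<longleftrightarrow> (p^2 dvd v \<or> p^2 dvd b \<or> (p dvd v \<and> p dvd b)) \<and>
      (q^2 dvd v \<or> q^2 dvd b \<or> (q dvd v \<and> q dvd b))" for v b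
    using ndvd[of "v*b"] pp_dvd[OF pp, of v b] pp_dvd[OF qp, of v b] by simp
  have qnp2: "\<not> q dvd p^2" using qnp qp prime_dvd_power by blast
  have pnq2: "\<not> p dvd q^2" using pnq pp prime_dvd_power by blast
  have p2n: "p^2 < n" and q2n: "q^2 < n" and p2qn: "p^2*q < n" and pq2n: "p*q^2 < n"
    and p2p2q: "p^2 < p^2*q"
  proof -
    have pp2: "1 < p^2" by (rule one_less_power[OF p1]) simp
    have qq2: "1 < q^2" by (rule one_less_power[OF q1]) simp
    have "p^2*1 < p^2*q^2" using qq2 p1 by (intro mult_strict_left_mono) auto
    then show "p^2 < n" unfolding n_def by simp
    have "q^2*1 < q^2*p^2" using pp2 q1 by (intro mult_strict_left_mono) auto
    then show "q^2 < n" unfolding n_def by (simp add: mult.commute)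
    have "p^2*q*1 < p^2*q*q" using p1 q1 by (intro mult_strict_left_mono) auto
    then show "p^2*q < n" unfolding n_def by (simp add: power2_eq_square algebra_simps)
    have "p*q^2*1 < p*q^2*p" using p1 q1 by (intro mult_strict_left_mono) auto
    then show "p*q^2 < n" unfolding n_def by (simp add: power2_eq_square algebra_simps)
    have "p^2*1 < p^2*q" using p1 q1 by (intro mult_strict_left_mono) auto
    then show "p^2 < p^2*q" by simp
  qed
  have memN: "w \<in> nbhd V (zd_adj n) v \<and> w \<in> V"
    if "v \<in> V" "0<w" "w<n" "w \<noteq> v" "n dvd v*w" for v w
  proof -
    have "0<v" "v<n" using that(1) zd_vertex_range V_def by auto
    then have "w \<in> V" using inV[of w v] that by (simp add: mult.commute)
    then show ?thesis using nb[OF that(1)] that by auto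
  qed
  have finT: "finite T" using finK TK finite_subset by blast
  have vA: "very_cost_effective_vertex V (zd_adj n) A v" if vAm: "v \<in> A" for v
  proof -
    have vV: "v \<in> V" using vAm AV by blast
    have vr: "0<v" "v<n" using vV zd_vertex_range V_def by auto
    have pqv: "p dvd v \<or> q dvd v" using zd_vertex_dvd[OF pp qp, of n 2 2 v] vV unfolding V_def n_def by auto
    let ?N = "nbhd V (zd_adj n) v"
    note N = nb[OF vV]
    show ?thesis unfolding very_cost_effective_vertex_def
    proof (cases "v \<in> T")
      case True
      note tv = Tfacts[OF True]
      have s1: "?N \<inter> A \<subseteq> T - {v}"
      proof
        fix b assume b: "b \<in> ?N \<inter> A"
        then have b1: "n dvd v*b" "b \<noteq> v" using N by auto
        then have "p dvd b" "q dvd b" using nvb[of v b] tv p2p[of b] q2q[of b] by blast+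
        then have "p*q dvd b" using pqdvd by blast
        then show "b \<in> T - {v}" using b AK b1 by auto
      qed
      have s2: "K - T \<subseteq> ?N \<inter> (V - A)"
      proof
        fix b assume b: "b \<in> K - T"
        then have bb: "0<b" "b<n" "p dvd b" "q dvd b" using K_def pqdvd by auto
        then have "n dvd v*b" using nvb[of v b] tv by blast
        moreover have "b \<noteq> v" using b True by auto
        moreover have "b \<notin> A" using b AK K_def by auto
        ultimately show "b \<in> ?N \<inter> (V - A)" using memN[OF vV, of b] bb by auto
      qed
      have "card (?N \<inter> A) \<le> card (T - {v})" using s1 finT by (intro card_mono) auto
      also have "\<dots> = card T - 1" using True finT by simp
      also have "\<dots> < card T" using Tpos by simp
      also have "\<dots> = card (K - T)" using cardKT by simp
      also have "\<dots> \<le> card (?N \<inter> (V - A))" using s2 fin[OF vV] by (intro card_mono) auto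
      finally show "card (?N \<inter> A) < card (?N \<inter> (V - A))" .
    next
      case False
      have v2: "\<not> p*q dvd v" "p dvd v \<or> \<not> q^2 dvd v" using vAm False A_def by auto
      consider (P1) "p dvd v" "\<not> p^2 dvd v" | (P2) "p^2 dvd v" | (Q1) "\<not> p dvd v" by blast
      then show "card (?N \<inter> A) < card (?N \<inter> (V - A))"
      proof cases
        case P1
        have nq: "\<not> q dvd v" using P1 v2 pqdvd[of v] by blast
        have "?N \<inter> A = {}"
        proof (rule ccontr)
          assume "?N \<inter> A \<noteq> {}"
          then obtain b where b: "b \<in> ?N" "b \<in> A" by blast
          then have "n dvd v*b" using N by auto
          then have "p dvd b" "q^2 dvd b" using nvb[of v b] P1 nq q2q[of v] p2p[of b] by blast+
          then have "p*q dvd b" using q2q[of b] pqdvd[of b] by blast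
          then show False using notA[of b] b(2) \<open>q^2 dvd b\<close> by blast
        qed
        moreover have "p*q^2 \<in> ?N \<inter> (V - A)"
        proof -
          have d: "p dvd p*q^2" "q^2 dvd p*q^2" "q dvd p*q^2" by auto
          have "n dvd v*(p*q^2)" using nvb[of v "p*q^2"] P1 d by blast
          moreover have "p*q^2 \<noteq> v" using d nq by auto
          moreover have "p*q^2 \<notin> A" using notA[of "p*q^2"] d pqdvd[of "p*q^2"] by blast
          ultimately show ?thesis using memN[OF vV, of "p*q^2"] pq2n p1 q1 by auto
        qed
        ultimately show ?thesis by (intro card_lt_helper[OF fin[OF vV]])
      next
        case P2
        have nq: "\<not> q dvd v" using P2 p2p[of v] v2 pqdvd[of v] by blast
        have "?N \<inter> A = {}"
        proof (rule ccontr)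
          assume "?N \<inter> A \<noteq> {}"
          then obtain b where b: "b \<in> ?N" "b \<in> A" by blast
          then have "n dvd v*b" using N by auto
          then have q2b: "q^2 dvd b" using nvb[of v b] nq q2q[of v] by blast
          show False
          proof (cases "p*q dvd b")
            case True then show False using notA[of b] b(2) q2b by blast
          next
            case False then show False using A2[of b] b(2) q2b pqdvd[of b] q2q[of b] by blast
          qed
        qed
        moreover have "q^2 \<in> ?N \<inter> (V - A)"
        proof -
          have "n dvd v*(q^2)" using nvb[of v "q^2"] P2 by simp
          moreover have "q^2 \<noteq> v" using nq by auto
          moreover have "q^2 \<notin> A" using A2[of "q^2"] pnq2 pqdvd by auto
          ultimately show ?thesis using memN[OF vV, of "q^2"] q2n q1 by auto
        qed
        ultimately show ?thesis by (intro card_lt_helper[OF fin[OF vV]])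
      next
        case Q1
        have qv: "q dvd v" "\<not> q^2 dvd v" using Q1 pqv v2 by auto
        have "?N \<inter> A = {}"
        proof (rule ccontr)
          assume "?N \<inter> A \<noteq> {}"
          then obtain b where b: "b \<in> ?N" "b \<in> A" by blast
          then have "n dvd v*b" using N by auto
          then have "p^2 dvd b" "q dvd b" using nvb[of v b] Q1 qv p2p[of v] q2q[of b] by blast+
          then have "p*q dvd b" using p2p[of b] pqdvd[of b] by blast
          then show False using notA[of b] b(2) \<open>p^2 dvd b\<close> by blast
        qed
        moreover have "p^2*q \<in> ?N \<inter> (V - A)"
        proof -
          have d: "p^2 dvd p^2*q" "p dvd p^2*q" "q dvd p^2*q" by (auto simp: power2_eq_square)
          have "n dvd v*(p^2*q)" using nvb[of v "p^2*q"] qv d by blast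
          moreover have "p^2*q \<noteq> v" using d Q1 by auto
          moreover have "p^2*q \<notin> A" using notA[of "p^2*q"] d pqdvd[of "p^2*q"] by blast
          ultimately show ?thesis using memN[OF vV, of "p^2*q"] p2qn p1 q1 by auto
        qed
        ultimately show ?thesis by (intro card_lt_helper[OF fin[OF vV]])
      qed
    qed
  qed
  have vB: "very_cost_effective_vertex V (zd_adj n) (V - A) v" if vBm: "v \<in> V - A" for v
  proof -
    have vV: "v \<in> V" and vnA: "v \<notin> A" using vBm by auto
    have vr: "0<v" "v<n" using vV zd_vertex_range V_def by auto
    have vnT: "v \<notin> T" using vnA A_def by auto
    have v2: "\<not> (\<not> p*q dvd v \<and> (p dvd v \<or> \<not> q^2 dvd v))" using vnA vV A_def by auto
    let ?N = "nbhd V (zd_adj n) v"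
    note N = nb[OF vV]
    show ?thesis unfolding very_cost_effective_vertex_def eVA
    proof (cases "p*q dvd v")
      case True
      have pv: "p dvd v" and qv: "q dvd v" using True pqdvd[of v] by auto
      have vKT: "v \<in> K - T" using True vr vnT K_def by auto
      have finKT: "finite (K - T)" using finK by simp
      show "card (?N \<inter> (V - A)) < card (?N \<inter> A)"
      proof (cases "p^2 dvd v")
        case False
        have s1: "?N \<inter> (V - A) \<subseteq> (K - T) - {v}"
        proof
          fix b assume b: "b \<in> ?N \<inter> (V - A)"
          then have bb: "0<b" "b<n" "b \<noteq> v" "n dvd v*b" "b \<in> V" "b \<notin> A" using N by auto
          have pb: "p dvd b" using nvb[of v b] bb(4) False pv p2p[of b] by blast
          have "p*q dvd b"
          proof (rule ccontr)
            assume "\<not> p*q dvd b"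
            then show False using A2[of b] bb(5,6) pb by blast
          qed
          then show "b \<in> (K - T) - {v}" using bb K_def A_def by auto
        qed
        have s2: "T \<subseteq> ?N \<inter> A"
        proof
          fix b assume bT: "b \<in> T"
          note tb = Tfacts[OF bT]
          have "n dvd v*b" using nvb[of v b] tb pv qv by blast
          moreover have "b \<noteq> v" using bT vnT by auto
          moreover have "b \<in> A" using bT A_def TV by auto
          ultimately show "b \<in> ?N \<inter> A" using memN[OF vV, of b] tb by auto
        qed
        have "card (?N \<inter> (V - A)) \<le> card ((K - T) - {v})" using s1 finKT by (intro card_mono) auto
        also have "\<dots> = card T - 1" using vKT finKT cardKT by simp
        also have "\<dots> < card T" using Tpos by simp
        also have "\<dots> \<le> card (?N \<inter> A)" using s2 fin[OF vV] by (intro card_mono) auto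
        finally show ?thesis .
      next
        case True
        note p2v = True
        have nq2: "\<not> q^2 dvd v" using nlt[OF vr] p2v by blast
        define Q2 where "Q2 = {b. 0<b \<and> b<n \<and> q^2 dvd b \<and> \<not> p dvd b}"
        define Q1 where "Q1 = {b. 0<b \<and> b<n \<and> q dvd b \<and> \<not> q^2 dvd b \<and> \<not> p dvd b}"
        have finQ1: "finite Q1" unfolding Q1_def by (rule finite_subset[of _ "{..<n}"]) auto
        have finQ2: "finite Q2" unfolding Q2_def by (rule finite_subset[of _ "{..<n}"]) auto
        have s1: "?N \<inter> (V - A) \<subseteq> ((K - T) - {v}) \<union> Q2"
        proof
          fix b assume b: "b \<in> ?N \<inter> (V - A)"
          then have bb: "0<b" "b<n" "b \<noteq> v" "n dvd v*b" "b \<in> V" "b \<notin> A" using N by auto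
          have qb: "q dvd b" using nvb[of v b] bb(4) nq2 qv q2q[of b] by blast
          show "b \<in> ((K - T) - {v}) \<union> Q2"
          proof (cases "p*q dvd b")
            case True then show ?thesis using bb K_def A_def by auto
          next
            case False
            then have "\<not> p dvd b" using qb pqdvd[of b] by blast
            moreover have "q^2 dvd b" using A2[of b] False bb(5,6) by blast
            ultimately show ?thesis using bb Q2_def by auto
          qed
        qed
        have s2: "T \<union> Q1 \<subseteq> ?N \<inter> A"
        proof
          fix b assume b: "b \<in> T \<union> Q1"
          show "b \<in> ?N \<inter> A"
          proof (cases "b \<in> T")
            case True
            note tb = Tfacts[OF True]
            have "n dvd v*b" using nvb[of v b] tb p2v qv by blast
            moreover have "b \<noteq> v" using True vnT by auto
            moreover have "b \<in> A" using True A_def TV by auto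
            ultimately show ?thesis using memN[OF vV, of b] tb by auto
          next
            case False
            then have bq: "0<b" "b<n" "q dvd b" "\<not> q^2 dvd b" "\<not> p dvd b" using b Q1_def by auto
            have "n dvd v*b" using nvb[of v b] bq p2v qv by blast
            moreover have "b \<noteq> v" using bq pv by auto
            moreover have "\<not> p*q dvd b" using bq pqdvd[of b] by blast
            ultimately show ?thesis using memN[OF vV, of b] bq A2[of b] by auto
          qed
        qed
        have disj: "T \<inter> Q1 = {}" using Tfacts Q1_def by auto
        have inj: "inj_on (\<lambda>b. b + p*q) Q2" by (auto simp: inj_on_def)
        have img: "(\<lambda>b. b + p*q) ` Q2 \<subseteq> Q1"
        proof
          fix c assume "c \<in> (\<lambda>b. b + p*q) ` Q2"
          then obtain b where b: "b \<in> Q2" "c = b + p*q" by blast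
          then have bb: "0<b" "b<n" "q^2 dvd b" "\<not> p dvd b" using Q2_def by auto
          have "b < q^2*p^2" using bb(2) unfolding n_def by (simp add: mult.commute)
          then have "b + q^2 \<le> q^2*p^2" using dvd_next_le[of "q^2" b "p^2"] bb(3) by blast
          then have cn: "c < n" using b(2) pqq unfolding n_def by (simp add: mult.commute)
          have qc: "q dvd c" using b(2) q2q[of b] bb by simp
          have nq2c: "\<not> q^2 dvd c"
          proof
            assume "q^2 dvd c"
            then have "q^2 dvd p*q" using b(2) bb(3) by (simp add: dvd_add_right_iff)
            then have "q*q dvd q*p" by (simp add: power2_eq_square mult.commute)
            then have "q dvd p" using q1 by simp
            then show False using qnp by simp
          qed
          have npc: "\<not> p dvd c"
          proof
            assume "p dvd c"
            then have "p dvd b" using b(2) by (simp add: dvd_add_left_iff)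
            then show False using bb by simp
          qed
          show "c \<in> Q1" using cn qc nq2c npc b(2) bb(1) Q1_def by auto
        qed
        have cQ: "card Q2 \<le> card Q1" using card_inj_on_le[OF inj img finQ1] .
        have "card (?N \<inter> (V - A)) \<le> card (((K - T) - {v}) \<union> Q2)"
          using s1 finKT finQ2 by (intro card_mono) auto
        also have "\<dots> \<le> card ((K - T) - {v}) + card Q2" by (rule card_Un_le)
        also have "\<dots> = card T - 1 + card Q2" using vKT finKT cardKT by simp
        also have "\<dots> < card T + card Q1" using Tpos cQ by simp
        also have "\<dots> = card (T \<union> Q1)" using finT finQ1 disj by (simp add: card_Un_disjoint)
        also have "\<dots> \<le> card (?N \<inter> A)" using s2 fin[OF vV] by (intro card_mono) auto
        finally show ?thesis .
      qed
    next
      case False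
      have pv: "\<not> p dvd v" and q2v: "q^2 dvd v" using False v2 by auto
      define P where "P = {b. 0<b \<and> b<n \<and> p^2 dvd b \<and> q dvd b}"
      have finP: "finite P" unfolding P_def by (rule finite_subset[of _ "{..<n}"]) auto
      have s1: "?N \<inter> (V - A) \<subseteq> P"
      proof
        fix b assume b: "b \<in> ?N \<inter> (V - A)"
        then have bb: "0<b" "b<n" "n dvd v*b" "b \<in> V" "b \<notin> A" using N by auto
        have p2b: "p^2 dvd b" using nvb[of v b] bb(3) pv p2p[of v] by blast
        have "p*q dvd b"
        proof (rule ccontr)
          assume "\<not> p*q dvd b"
          then show False using A2[of b] bb(4,5) p2p[of b] p2b by blast
        qed
        then show "b \<in> P" using bb p2b pqdvd[of b] P_def by auto
      qed
      have p2in: "p^2 \<in> ?N \<inter> A"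
      proof -
        have "n dvd v*p^2" using nvb[of v "p^2"] q2v by simp
        moreover have "p^2 \<noteq> v" using pv by auto
        moreover have "\<not> p*q dvd p^2" using qnp2 pqdvd[of "p^2"] by blast
        ultimately show ?thesis using memN[OF vV, of "p^2"] p2n p1 A2[of "p^2"] by auto
      qed
      have inj: "inj_on (\<lambda>b. b + p^2) P" by (auto simp: inj_on_def)
      have img: "(\<lambda>b. b + p^2) ` P \<subseteq> (?N \<inter> A) - {p^2}"
      proof
        fix c assume "c \<in> (\<lambda>b. b + p^2) ` P"
        then obtain b where b: "b \<in> P" "c = b + p^2" by blast
        then have bb: "0<b" "b<n" "p^2 dvd b" "q dvd b" using P_def by auto
        have "coprime (p^2) q" using cpq by simp
        then have "p^2*q dvd b" using bb divides_mult by blast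
        moreover have "b < p^2*q*q" using bb(2) unfolding n_def by (simp add: power2_eq_square algebra_simps)
        ultimately have "b + p^2*q \<le> p^2*q*q" using dvd_next_le[of "p^2*q" b q] by blast
        moreover have "c < b + p^2*q" using b(2) p2p2q by linarith
        moreover have "p^2*q*q = n" unfolding n_def by (simp add: power2_eq_square algebra_simps)
        ultimately have cn: "c < n" by linarith
        have p2c: "p^2 dvd c" using b(2) bb by simp
        have nqc: "\<not> q dvd c"
        proof
          assume "q dvd c"
          then have "q dvd p^2" using b(2) bb(4) by (simp add: dvd_add_right_iff)
          then show False using qnp2 by simp
        qed
        have "n dvd v*c" using nvb[of v c] p2c q2v by blast
        moreover have "c \<noteq> v" using p2c p2p[of c] pv by auto
        moreover have "\<not> p*q dvd c" using nqc pqdvd[of c] by blast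
        moreover have "c \<noteq> p^2" using b(2) bb(1) by simp
        moreover have "0 < c" using b(2) bb by simp
        ultimately show "c \<in> (?N \<inter> A) - {p^2}" using memN[OF vV, of c] cn A2[of c] p2c p2p[of c] by auto
      qed
      have "card (?N \<inter> (V - A)) \<le> card P" using s1 finP by (intro card_mono)
      also have "\<dots> \<le> card ((?N \<inter> A) - {p^2})" using card_inj_on_le[OF inj img] fin[OF vV] by simp
      also have "\<dots> < card (?N \<inter> A)" using p2in fin[OF vV] by (intro card_Diff1_less) auto
      finally show "card (?N \<inter> (V - A)) < card (?N \<inter> A)" .
    qed
  qed
  show ?thesis
    unfolding n_def[symmetric] V_def[symmetric] very_cost_effective_graph_def very_cost_effective_set_def
    using vA vB AV by blast
qed


theorem mainTheorem3:
  fixes p q :: nat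
  assumes "prime p" and "prime q" and "p \<noteq> q"
  shows "very_cost_effective_graph (zd_vertices (p^2 * q)) (zd_adj (p^2 * q)) \<and>
         (3 \<le> p \<and> 3 \<le> q \<and> p < q \<longrightarrow>
          very_cost_effective_graph (zd_vertices (p^2 * q^2)) (zd_adj (p^2 * q^2)))"
  using part1[OF assms] part2[OF assms(1,2)] by blast

end
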